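(* Let $F$ be a field of characteristic $0$, $n\ge 3$, and $f\in T_n$. Let $\pi:F[x_1,\dots,x_n]\to F[x_1,\dots,x_{n-2}]$ be the homomorphism with $\pi(x_{n-1})=\pi(x_n)=0$ and $\pi(x_k)=x_k$ for $k\le n-2$, and write $\overline{p_k}=x_1^k+\dots+x_{n-2}^k$. Suppose there is a polynomial $g\in F[y_1,y_3,y_5,\dots]$ (finitely many variables) with $\pi(f)=g(\overline{p_1},\overline{p_3},\overline{p_5},\dots)$. Then $f-g(p_1,p_3,p_5,\dots)$ is divisible by $\delta=\prod_{1\le k<\ell\le n}(x_k+x_\ell)$.
   Context: $p_k=x_1^k+\dots+x_n^k$. A polynomial $p\in F[x_1,\dots,x_n]$ is monotypically supersymmetric if it is symmetric and, after substituting $x_1=t,\ x_2=-t$, the result does not depend on $t$; $T_n$ is the algebra of such polynomials. *)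

theory Defs
  imports Main "HOL-Library.Poly_Mapping" "HOL-Combinatorics.Permutations"
begin

text \<open>The paper's variables x_1..x_n are
  the variables with indices 1..n.\<close>

type_synonym 'a mpoly = "(nat \<Rightarrow>\<^sub>0 nat) \<Rightarrow>\<^sub>0 'a"

definition mconst :: "'a::zero \<Rightarrow> 'a mpoly" where
  "mconst c = Poly_Mapping.single 0 c"

definition Var :: "nat \<Rightarrow> 'a::{zero,one} mpoly" where
  "Var i = Poly_Mapping.single (Poly_Mapping.single i 1) 1"

definition subst :: "(nat \<Rightarrow> 'a::comm_ring_1 mpoly) \<Rightarrow> 'a mpoly \<Rightarrow> 'a mpoly" where
  "subst s p = (\<Sum>m\<in>Poly_Mapping.keys p. mconst (Poly_Mapping.lookup p m) *
                  (\<Prod>i\<in>Poly_Mapping.keys m. s i ^ Poly_Mapping.lookup m i))"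

definition vars :: "'a::zero mpoly \<Rightarrow> nat set" where
  "vars p = (\<Union>m\<in>Poly_Mapping.keys p. Poly_Mapping.keys m)"

definition in_ring :: "nat \<Rightarrow> 'a::zero mpoly \<Rightarrow> bool" where
  "in_ring n p \<longleftrightarrow> vars p \<subseteq> {1..n}"

definition psum :: "nat \<Rightarrow> nat \<Rightarrow> 'a::comm_ring_1 mpoly" where
  "psum n k = (\<Sum>i=1..n. Var i ^ k)"

definition symmetric :: "nat \<Rightarrow> 'a::comm_ring_1 mpoly \<Rightarrow> bool" where
  "symmetric n p \<longleftrightarrow> in_ring n p \<and>
     (\<forall>\<sigma>. \<sigma> permutes {1..n} \<longrightarrow> subst (\<lambda>i. Var (\<sigma> i)) p = p)"

text \<open>Monotypically supersymmetric: symmetric, and after substituting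
  x_1 = t, x_2 = -t the result does not depend on t. We use the variable x_1
  itself as the new variable t (it no longer occurs otherwise after the
  substitution); "does not depend on t" means no monomial of the result
  contains t.\<close>
definition mono_supersym :: "nat \<Rightarrow> 'a::comm_ring_1 mpoly \<Rightarrow> bool" where
  "mono_supersym n p \<longleftrightarrow> symmetric n p \<and>
     1 \<notin> vars (subst (\<lambda>i. if i = 2 then - Var 1 else Var i) p)"

definition T :: "nat \<Rightarrow> 'a::comm_ring_1 mpoly set" where
  "T n = {p. mono_supersym n p}"

definition delta :: "nat \<Rightarrow> 'a::comm_ring_1 mpoly" where
  "delta n = (\<Prod>(k,l)\<in>{(k,l). 1 \<le> k \<and> k < l \<and> l \<le> n}. Var k + Var l)"

end

theory Submission
  imports Defs
begin

abbreviation mono :: "(nat \<Rightarrow> 'a::comm_ring_1 mpoly) \<Rightarrow> (nat \<Rightarrow>\<^sub>0 nat) \<Rightarrow> 'a mpoly" where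
  "mono s m \<equiv> (\<Prod>i\<in>Poly_Mapping.keys m. s i ^ Poly_Mapping.lookup m i)"

lemma mconst_add: "mconst (a + b) = mconst a + mconst b"
  by (simp add: mconst_def single_add)
lemma mconst_mult: "mconst (a * b) = mconst a * (mconst b :: 'a::comm_ring_1 mpoly)"
  by (simp add: mconst_def mult_single)
lemma mconst_uminus: "mconst (- a) = - (mconst a :: 'a::comm_ring_1 mpoly)"
  by (simp add: mconst_def single_uminus)
lemma mconst_0[simp]: "mconst 0 = 0"
  by (simp add: mconst_def)
lemma mconst_1[simp]: "mconst 1 = (1 :: 'a::comm_ring_1 mpoly)"
  by (simp add: mconst_def)

lemma mono_superset:
  assumes "finite A" "Poly_Mapping.keys m \<subseteq> A"
  shows "mono s m = (\<Prod>i\<in>A. s i ^ Poly_Mapping.lookup m i)"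
  by (rule prod.mono_neutral_left) (use assms in \<open>auto simp: in_keys_iff\<close>)

lemma mono_add: "mono s (m + m') = mono s m * mono s m'"
proof -
  let ?A = "Poly_Mapping.keys m \<union> Poly_Mapping.keys m'"
  have "mono s (m + m') = (\<Prod>i\<in>?A. s i ^ Poly_Mapping.lookup (m + m') i)"
    using keys_add[of m m'] by (intro mono_superset) auto
  also have "\<dots> = (\<Prod>i\<in>?A. s i ^ Poly_Mapping.lookup m i) * (\<Prod>i\<in>?A. s i ^ Poly_Mapping.lookup m' i)"
    by (simp add: lookup_add power_add prod.distrib)
  also have "\<dots> = mono s m * mono s m'"
    by (subst (1 2) mono_superset[where A="?A"]) auto
  finally show ?thesis .
qed

lemma mono_zero[simp]: "mono s 0 = 1" by simp

lemma subst_superset: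
  assumes "finite A" "Poly_Mapping.keys p \<subseteq> A"
  shows "subst s p = (\<Sum>m\<in>A. mconst (Poly_Mapping.lookup p m) * mono s m)"
  unfolding subst_def
  by (rule sum.mono_neutral_left) (use assms in \<open>auto simp: in_keys_iff\<close>)

lemma subst_add: "subst s (p + q) = subst s p + subst s q"
proof -
  let ?A = "Poly_Mapping.keys p \<union> Poly_Mapping.keys q"
  have "subst s (p + q) = (\<Sum>m\<in>?A. mconst (Poly_Mapping.lookup (p + q) m) * mono s m)"
    using keys_add[of p q] by (intro subst_superset) auto
  also have "\<dots> = (\<Sum>m\<in>?A. mconst (Poly_Mapping.lookup p m) * mono s m) + (\<Sum>m\<in>?A. mconst (Poly_Mapping.lookup q m) * mono s m)"
    by (simp add: lookup_add mconst_add distrib_right sum.distrib)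
  also have "\<dots> = subst s p + subst s q"
    by (subst (1 2) subst_superset[where A="?A"]) auto
  finally show ?thesis .
qed

lemma subst_zero[simp]: "subst s 0 = 0"
  by (simp add: subst_def)

lemma subst_uminus: "subst s (- p) = - subst s p"
  by (simp add: subst_def keys_minus lookup_minus mconst_uminus sum_negf)

lemma subst_diff: "subst s (p - q) = subst s p - subst s q"
  using subst_add[of s p "-q"] by (simp add: subst_uminus)

lemma subst_single: "subst s (Poly_Mapping.single m c) = mconst c * mono s m"
  by (subst subst_superset[where A="{m}"]) (auto simp: lookup_single)

lemma subst_sum: "subst s (sum f A) = (\<Sum>x\<in>A. subst s (f x))"
  by (induction A rule: infinite_finite_induct) (auto simp: subst_add)

lemma expansion: "(p::'b \<Rightarrow>\<^sub>0 'c::comm_monoid_add) = (\<Sum>m\<in>Poly_Mapping.keys p. Poly_Mapping.single m (Poly_Mapping.lookup p m))"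
proof (rule poly_mapping_eqI)
  fix x
  show "Poly_Mapping.lookup p x = Poly_Mapping.lookup (\<Sum>m\<in>Poly_Mapping.keys p. Poly_Mapping.single m (Poly_Mapping.lookup p m)) x"
    by (simp add: lookup_sum lookup_single when_def in_keys_iff)
qed

lemma subst_mult: "subst s (p * q) = subst s p * subst s q"
proof -
  have "p * q = (\<Sum>m\<in>Poly_Mapping.keys p. \<Sum>m'\<in>Poly_Mapping.keys q.
      Poly_Mapping.single (m + m') (Poly_Mapping.lookup p m * Poly_Mapping.lookup q m'))"
  proof -
    have "p * q = (\<Sum>m\<in>Poly_Mapping.keys p. Poly_Mapping.single m (Poly_Mapping.lookup p m)) *
       (\<Sum>m'\<in>Poly_Mapping.keys q. Poly_Mapping.single m' (Poly_Mapping.lookup q m'))"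
      by (simp only: expansion[symmetric])
    thus ?thesis by (simp add: sum_distrib_left sum_distrib_right mult_single) (rule sum.swap)
  qed
  hence "subst s (p * q) = (\<Sum>m\<in>Poly_Mapping.keys p. \<Sum>m'\<in>Poly_Mapping.keys q.
      (mconst (Poly_Mapping.lookup p m) * mono s m) * (mconst (Poly_Mapping.lookup q m') * mono s m'))"
    by (simp add: subst_sum subst_single mono_add mconst_mult mult_ac)
  also have "\<dots> = subst s p * subst s q"
    by (simp add: subst_def sum_distrib_left sum_distrib_right) (rule sum.swap)
  finally show ?thesis .
qed

lemma subst_mconst[simp]: "subst s (mconst c) = mconst c"
  by (simp add: mconst_def subst_single)

lemma subst_one[simp]: "subst s 1 = 1"
  using subst_mconst[of s 1] by simp

lemma subst_Var[simp]: "subst s (Var i) = s i"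
  by (simp add: Var_def subst_single)

lemma subst_power: "subst s (p ^ k) = subst s p ^ k"
  by (induction k) (auto simp: subst_mult)

lemma subst_prod: "subst s (prod f A) = (\<Prod>x\<in>A. subst s (f x))"
  by (induction A rule: infinite_finite_induct) (auto simp: subst_mult)

lemma subst_comp: "subst s (subst t p) = subst (\<lambda>i. subst s (t i)) p"
  by (simp add: subst_def[of t] subst_sum subst_mult subst_prod subst_power)
     (simp add: subst_def)

lemma subst_cong:
  assumes "\<And>i. i \<in> vars p \<Longrightarrow> s i = t i"
  shows "subst s p = subst t p"
  unfolding subst_def
  by (rule sum.cong[OF refl], rule arg_cong[where f="\<lambda>x. _ * x"], rule prod.cong[OF refl])
     (use assms in \<open>fastforce simp: vars_def\<close>)

lemma Var_power: "(Var i :: 'a::comm_ring_1 mpoly) ^ e = Poly_Mapping.single (Poly_Mapping.single i e) 1"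
proof (induction e)
  case 0 then show ?case by simp
next
  case (Suc e)
  have "Poly_Mapping.single i (Suc e) = Poly_Mapping.single i 1 + Poly_Mapping.single i e"
    by (simp add: single_add[symmetric])
  with Suc show ?case by (simp add: Var_def mult_single)
qed

lemma prod_singles: "(\<Prod>i\<in>A. Poly_Mapping.single (f i) (1::'a::comm_ring_1)) = Poly_Mapping.single (\<Sum>i\<in>A. f i) 1"
  by (induction A rule: infinite_finite_induct) (auto simp: mult_single)

lemma mono_Var: "mono Var m = (Poly_Mapping.single m 1 :: 'a::comm_ring_1 mpoly)"
  by (simp add: Var_power prod_singles expansion[of m, symmetric])

lemma subst_Var_id: "subst Var p = (p :: 'a::comm_ring_1 mpoly)"
proof -
  have "subst Var p = (\<Sum>m\<in>Poly_Mapping.keys p. Poly_Mapping.single m (Poly_Mapping.lookup p m))"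
    unfolding subst_def mono_Var by (simp add: mconst_def mult_single)
  also have "\<dots> = p" by (rule expansion[symmetric])
  finally show ?thesis .
qed

lemma subst_id_on_vars:
  assumes "\<And>i. i \<in> vars p \<Longrightarrow> s i = Var i"
  shows "subst s p = p"
  using subst_cong[of p s Var, OF assms] subst_Var_id by simp

lemma dvd_power_diff:
  fixes d a b :: "'b::comm_ring_1"
  assumes "d dvd a - b" shows "d dvd a ^ e - b ^ e"
proof (induction e)
  case 0 then show ?case by simp
next
  case (Suc e)
  have "a ^ Suc e - b ^ Suc e = a * (a ^ e - b ^ e) + (a - b) * b ^ e"
    by (simp add: algebra_simps)
  with Suc assms show ?case by (simp add: dvd_add dvd_mult dvd_mult2)
qed

lemma dvd_prod_diff:
  fixes d :: "'b::comm_ring_1"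
  assumes "\<And>i. i \<in> A \<Longrightarrow> d dvd a i - b i"
  shows "d dvd (\<Prod>i\<in>A. a i) - (\<Prod>i\<in>A. b i)"
  using assms
proof (induction A rule: infinite_finite_induct)
  case (insert x F)
  have "(\<Prod>i\<in>insert x F. a i) - (\<Prod>i\<in>insert x F. b i)
      = a x * ((\<Prod>i\<in>F. a i) - (\<Prod>i\<in>F. b i)) + (a x - b x) * (\<Prod>i\<in>F. b i)"
    using insert by (simp add: algebra_simps)
  with insert show ?case by (simp add: dvd_add dvd_mult dvd_mult2)
qed auto

lemma subst_dvd_diff:
  assumes "\<And>i. d dvd s i - t i"
  shows "d dvd subst s p - subst t p"
  unfolding subst_def sum_subtractf[symmetric] right_diff_distrib[symmetric]
  by (intro dvd_sum dvd_mult dvd_prod_diff dvd_power_diff assms)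

lemma subst_psum: "subst s (psum n k) = (\<Sum>i=1..n. s i ^ k)"
  by (simp add: psum_def subst_sum subst_power)

lemma lookup_Var: "Poly_Mapping.lookup (Var j :: 'a::comm_ring_1 mpoly) (Poly_Mapping.single i 1) = (if i = j then 1 else 0)"
proof -
  have "Poly_Mapping.single j (1::nat) = Poly_Mapping.single i 1 \<Longrightarrow> i = j"
    by (metis lookup_single_eq lookup_single_not_eq one_neq_zero)
  thus ?thesis by (auto simp: Var_def lookup_single when_def)
qed

lemma linear_dvd:
  fixes q :: "'a::comm_ring_1 mpoly"
  shows "(Var k + Var l) dvd q - subst (\<lambda>i. if i = l then - Var k else Var i) q"
proof -
  have "(Var k + Var l) dvd subst Var q - subst (\<lambda>i. if i = l then - Var k else Var i) q"
    by (rule subst_dvd_diff) (auto simp: add.commute)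
  thus ?thesis by (simp add: subst_Var_id)
qed

lemma factor_nonzero:
  fixes a b k l :: nat
  assumes "a < b" "k < l" "(a, b) \<noteq> (k, l)"
  shows "subst (\<lambda>i. if i = l then - Var k else Var i) (Var a + Var b :: 'a::comm_ring_1 mpoly) \<noteq> 0"
proof -
  let ?s = "\<lambda>i. if i = l then - Var k else (Var i :: 'a mpoly)"
  have e: "subst ?s (Var a + Var b) = ?s a + ?s b" by (simp add: subst_add)
  show ?thesis
  proof (cases "a = l")
    case True
    hence "b \<noteq> l" "b \<noteq> k" using assms by auto
    hence "Poly_Mapping.lookup (?s a + ?s b) (Poly_Mapping.single b 1) = 1"
      using True by (simp add: lookup_add lookup_minus lookup_Var lookup_Var[simplified])
    thus ?thesis unfolding e by auto
  next
    case False
    hence "a \<noteq> k \<or> b \<noteq> l" using assms by auto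
    have "a \<noteq> b" using assms by auto
    have "Poly_Mapping.lookup (?s a + ?s b) (Poly_Mapping.single a 1) = 1"
      using False \<open>a \<noteq> b\<close> assms by (auto simp: lookup_add lookup_minus lookup_Var lookup_Var[simplified])
    thus ?thesis unfolding e by auto
  qed
qed

lemma tau_zero:
  fixes f g :: "'a::field_char_0 mpoly" and n :: nat
  assumes n3: "n \<ge> 3"
    and fT: "f \<in> T n"
    and godd: "\<forall>j\<in>vars g. odd j"
    and hyp: "subst (\<lambda>i. if i = n - 1 \<or> i = n then 0 else Var i) f
         = subst (\<lambda>k. psum (n - 2) k) g"
  shows "subst (\<lambda>i. if i = 2 then - Var 1 else Var i) (f - subst (\<lambda>k. psum n k) g) = 0"
proof -
  define ts :: "nat \<Rightarrow> 'a mpoly" where "ts = (\<lambda>i. if i = 2 then - Var 1 else Var i)"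
  define Z :: "nat \<Rightarrow> 'a mpoly" where "Z = (\<lambda>i. if i = 1 \<or> i = 2 then 0 else Var i)"
  define Q :: "'a mpoly" where "Q = subst (\<lambda>k. \<Sum>i=3..n. Var i ^ k) g"
  have symf: "\<And>\<sigma>. \<sigma> permutes {1..n} \<Longrightarrow> subst (\<lambda>i. Var (\<sigma> i)) f = f"
    and nv: "1 \<notin> vars (subst ts f)"
    using fT by (auto simp: T_def mono_supersym_def symmetric_def ts_def)
  have A1: "subst ts f = subst Z f"
  proof -
    have "subst ts f = subst (\<lambda>i. if i = 1 then 0 else Var i) (subst ts f)"
      by (rule subst_id_on_vars[symmetric]) (use nv in auto)
    also have "\<dots> = subst Z f"
      unfolding subst_comp by (rule arg_cong[where f="\<lambda>s. subst s f"]) (auto simp: ts_def Z_def subst_uminus)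
    finally show ?thesis .
  qed
  define \<rho> where "\<rho> = transpose 2 n \<circ> transpose 1 (n - 1)"
  have rp: "\<rho> permutes {1..n}"
    unfolding \<rho>_def using n3 by (intro permutes_compose permutes_swap_id) auto
  have r1: "\<rho> (n - 1) = 1" and r2: "\<rho> n = 2"
    using n3 by (auto simp: \<rho>_def transpose_def)
  have rinj: "inj \<rho>" using rp by (rule permutes_inj)
  have r12: "\<rho> i = 1 \<longleftrightarrow> i = n - 1" "\<rho> i = 2 \<longleftrightarrow> i = n" for i
    using rinj r1 r2 by (metis injD)+
  have bij: "bij_betw \<rho> {1..n-2} {3..n}"
  proof -
    have "\<rho> ` ({1..n} - {n-1, n}) = \<rho> ` {1..n} - \<rho> ` {n-1, n}"
      by (rule image_set_diff[OF rinj])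
    also have "\<dots> = {1..n} - {1, 2}" using permutes_image[OF rp] r1 r2 by simp
    also have "\<dots> = {3..n}" by auto
    finally have im0: "\<rho> ` ({1..n} - {n-1, n}) = {3..n}" .
    have "{1..n} - {n-1, n} = {1..n-2}" using n3 by auto
    with im0 have im: "\<rho> ` {1..n-2} = {3..n}" by simp
    show ?thesis unfolding bij_betw_def using im inj_on_subset[OF rinj] by auto
  qed
  have A2: "subst Z f = Q"
  proof -
    have "subst Z f = subst Z (subst (\<lambda>i. Var (\<rho> i)) f)" using symf[OF rp] by simp
    also have "\<dots> = subst (\<lambda>i. if i = n - 1 \<or> i = n then 0 else Var (\<rho> i)) f"
      unfolding subst_comp by (rule arg_cong[where f="\<lambda>s. subst s f"]) (auto simp: Z_def r12 r12[simplified])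
    also have "\<dots> = subst (\<lambda>i. Var (\<rho> i)) (subst (\<lambda>i. if i = n - 1 \<or> i = n then 0 else Var i) f)"
      unfolding subst_comp by (rule arg_cong[where f="\<lambda>s. subst s f"]) auto
    also have "\<dots> = subst (\<lambda>k. \<Sum>i=1..n-2. Var (\<rho> i) ^ k) g"
      unfolding hyp subst_comp subst_psum by simp
    also have "\<dots> = Q"
      unfolding Q_def
      by (rule arg_cong[where f="\<lambda>s. subst s g"], rule ext, rule sum.reindex_bij_betw[OF bij, where g="\<lambda>i. Var i ^ _"])
    finally show ?thesis .
  qed
  have B: "subst ts (subst (\<lambda>k. psum n k) g) = Q"
  proof -
    have "subst ts (subst (\<lambda>k. psum n k) g) = subst (\<lambda>k. \<Sum>i=1..n. ts i ^ k) g"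
      unfolding subst_comp subst_psum ..
    also have "\<dots> = Q" unfolding Q_def
    proof (rule subst_cong)
      fix k assume "k \<in> vars g"
      hence ok: "odd k" using godd by auto
      have set: "{1..n} = insert 1 (insert 2 {3..n})" using n3 by auto
      have "(\<Sum>i=1..n. ts i ^ k) = ts 1 ^ k + ts 2 ^ k + (\<Sum>i=3..n. ts i ^ k)"
        unfolding set by (simp add: add.assoc)
      also have "(\<Sum>i=3..n. ts i ^ k) = (\<Sum>i=3..n. Var i ^ k)"
        by (rule sum.cong) (auto simp: ts_def)
      finally show "(\<Sum>i=1..n. ts i ^ k) = (\<Sum>i=3..n. Var i ^ k)"
        using ok by (simp add: ts_def power_minus_odd)
    qed
    finally show ?thesis .
  qed
  show ?thesis
    using A1 A2 B by (simp add: subst_diff ts_def[symmetric])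
qed

lemma pair_zero:
  fixes f g :: "'a::field_char_0 mpoly" and n :: nat
  assumes n3: "n \<ge> 3"
    and fT: "f \<in> T n"
    and godd: "\<forall>j\<in>vars g. odd j"
    and hyp: "subst (\<lambda>i. if i = n - 1 \<or> i = n then 0 else Var i) f
         = subst (\<lambda>k. psum (n - 2) k) g"
    and kl: "1 \<le> k" "k < l" "l \<le> n"
  shows "subst (\<lambda>i. if i = l then - Var k else Var i) (f - subst (\<lambda>k. psum n k) g) = 0"
proof -
  define h where "h = f - subst (\<lambda>k. psum n k) g"
  have t0: "subst (\<lambda>i. if i = 2 then - Var 1 else Var i) h = 0"
    unfolding h_def by (rule tau_zero[OF assms(1-4)])
  have symf: "\<And>\<sigma>. \<sigma> permutes {1..n} \<Longrightarrow> subst (\<lambda>i. Var (\<sigma> i)) f = f"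
    using fT by (auto simp: T_def mono_supersym_def symmetric_def)
  define \<rho> where "\<rho> = transpose 1 k \<circ> transpose 2 l"
  have rp: "\<rho> permutes {1..n}"
    unfolding \<rho>_def using n3 kl by (intro permutes_compose permutes_swap_id) auto
  have r1: "\<rho> 1 = k" and r2: "\<rho> 2 = l"
    using kl by (auto simp: \<rho>_def transpose_def)
  have rinj: "inj \<rho>" using rp by (rule permutes_inj)
  have rl: "\<rho> i = l \<longleftrightarrow> i = 2" for i
    using rinj r2 by (metis injD)
  have symh: "subst (\<lambda>i. Var (\<rho> i)) h = h"
  proof -
    have "subst (\<lambda>i. Var (\<rho> i)) (subst (\<lambda>k. psum n k) g) = subst (\<lambda>k. psum n k) g"
      unfolding subst_comp subst_psum
    proof (rule arg_cong[where f="\<lambda>s. subst s g"], rule ext)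
      fix j
      show "(\<Sum>i=1..n. Var (\<rho> i) ^ j) = (psum n j :: 'a mpoly)"
        unfolding psum_def using sum.permute[OF rp, of "\<lambda>i. Var i ^ j"] unfolding comp_def by (rule sym)
    qed
    thus ?thesis unfolding h_def subst_diff symf[OF rp] by simp
  qed
  have "subst (\<lambda>i. if i = l then - Var k else Var i) h
      = subst (\<lambda>i. if i = l then - Var k else Var i) (subst (\<lambda>i. Var (\<rho> i)) h)"
    using symh by simp
  also have "\<dots> = subst (\<lambda>i. Var (\<rho> i)) (subst (\<lambda>i. if i = 2 then - Var 1 else Var i) h)"
    unfolding subst_comp
    by (rule arg_cong[where f="\<lambda>s. subst s h"], rule ext) (auto simp: rl r1 r1[simplified] subst_uminus)
  also have "\<dots> = 0" using t0 by simp
  finally show ?thesis unfolding h_def .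
qed

theorem mainTheorem6:
  fixes f g :: "'a::field_char_0 mpoly" and n :: nat
  assumes "n \<ge> 3"
    and "f \<in> T n"
    and "\<forall>j\<in>vars g. odd j"
    and "subst (\<lambda>i. if i = n - 1 \<or> i = n then 0 else Var i) f
         = subst (\<lambda>k. psum (n - 2) k) g"
  shows "delta n dvd (f - subst (\<lambda>k. psum n k) g)"
proof -
  define h where "h = f - subst (\<lambda>k. psum n k) g"
  define P where "P = {(k,l). 1 \<le> k \<and> k < l \<and> l \<le> n}"
  have finP: "finite P"
    by (rule finite_subset[of _ "{1..n} \<times> {1..n}"]) (auto simp: P_def)
  have zero: "subst (\<lambda>i. if i = l then - Var k else Var i) h = 0" if "(k,l) \<in> P" for k l
    using that unfolding h_def P_def by (intro pair_zero[OF assms]) auto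
  have main: "S \<subseteq> P \<Longrightarrow> (\<Prod>(k,l)\<in>S. Var k + Var l) dvd h" if "finite S" for S
    using that
  proof (induction S rule: finite_induct)
    case empty then show ?case by simp
  next
    case (insert x S)
    obtain k l where x: "x = (k,l)" by (cases x)
    let ?s = "\<lambda>i. if i = l then - Var k else (Var i :: 'a mpoly)"
    from insert obtain q where q: "h = (\<Prod>(k,l)\<in>S. Var k + Var l) * q"
      by (auto elim: dvdE)
    have "subst ?s h = 0" using zero insert x by auto
    hence "(\<Prod>p\<in>S. subst ?s (case p of (a,b) \<Rightarrow> Var a + Var b)) * subst ?s q = 0"
      unfolding q subst_mult subst_prod .
    moreover have "(\<Prod>p\<in>S. subst ?s (case p of (a,b) \<Rightarrow> Var a + Var b)) \<noteq> 0"
    proof -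
      have "subst ?s (case p of (a,b) \<Rightarrow> Var a + Var b) \<noteq> 0" if "p \<in> S" for p
      proof -
        obtain a b where p: "p = (a,b)" by (cases p)
        have "(a,b) \<in> P" "(k,l) \<in> P" "(a,b) \<noteq> (k,l)" using that p insert x by auto
        thus ?thesis unfolding p using factor_nonzero[of a b k l] by (auto simp: P_def)
      qed
      thus ?thesis using insert(1) by (simp add: prod_zero_iff)
    qed
    ultimately have "subst ?s q = 0" by simp
    hence "(Var k + Var l) dvd q" using linear_dvd[of k l q] by simp
    then obtain r where "q = (Var k + Var l) * r" by (auto elim: dvdE)
    hence "h = (\<Prod>(k,l)\<in>insert x S. Var k + Var l) * r"
      using q insert x by (simp add: mult_ac)
    thus ?case by simp
  qed
  have "(delta n :: 'a mpoly) = (\<Prod>(k,l)\<in>P. Var k + Var l)" by (simp add: delta_def P_def)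
  thus ?thesis using main[OF finP order_refl] unfolding h_def by (simp only:)
qed

end
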